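(* For $n\ge2$ and $k_1,\dots,k_n\in\mathbb Z\setminus\{0\}$ with $k=\sum_{j=1}^nk_j\neq0$, let $H_n=k^3-\sum_{j=1}^nk_j^3$, $k_{\max}=\max_j|k_j|$, and let $k_{\max_j}$ be the $j$-th largest element of $\{|k_1|,\dots,|k_n|\}$. There is a constant $c>0$ depending only on $n$ such that: (1) If $n=2$: $|H_2|\ge c\,k_{\max}^2$. (2) If $n=3$: at least one of the following holds: (A) $|H_3|\ge c\,k_{\max}^2$; (B) $k_{j_0}=k$ for some $j_0\in\{1,2,3\}$; (C) $|k_j|\ge c|k|$ for all $j\in\{1,2,3\}$. (3) If $n\ge4$: at least one of the following holds: (A) $|H_n|\ge c\,k_{\max}^2$; (B) $k=k_{j_0}$ for some $j_0\in\{1,\dots,n\}$; (C) $k_{\max_3}\ge c|k|$; (D) $k_{\max_3}^2k_{\max_4}\ge c\,k_{\max}^2$. *)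

theory Defs
  imports Complex_Main
begin

text \<open>The tuple (k_1,...,k_n) is represented as a list ks of length n
  (ks ! (j-1) = k_j).\<close>

definition Hn :: "int list \<Rightarrow> int" where
  "Hn ks = (sum_list ks) ^ 3 - sum_list (map (\<lambda>x. x ^ 3) ks)"

definition kmax :: "int list \<Rightarrow> int" where
  "kmax ks = Max (abs ` set ks)"

text \<open>kmaxj ks j: the j-th largest (1-indexed, counted with multiplicity)
  of the values |k_1|,...,|k_n|.\<close>
definition kmaxj :: "int list \<Rightarrow> nat \<Rightarrow> int" where
  "kmaxj ks j = rev (sort (map abs ks)) ! (j - 1)"

end

theory Submission
  imports Defs "HOL-Library.Multiset"
begin


lemma normalize:
  fixes ks :: "int list"
  obtains ks' where "mset ks' = mset ks" "rev (sort (map abs ks)) = map abs ks'"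
    "sorted_wrt (\<lambda>x y. y \<le> x) (map abs ks')"
proof -
  define ks' where "ks' = sort_key (\<lambda>x. - \<bar>x\<bar>) ks"
  have m: "mset ks' = mset ks" unfolding ks'_def by simp
  have s: "sorted (map (\<lambda>x. - \<bar>x\<bar>) ks')" unfolding ks'_def by simp
  have sw: "sorted_wrt (\<lambda>x y. y \<le> x) (map abs ks')"
    using s by (simp add: sorted_map sorted_wrt_map)
  have "sort (map abs ks) = rev (map abs ks')"
  proof (rule properties_for_sort)
    show "mset (rev (map abs ks')) = mset (map abs ks)" using m by simp
    show "sorted (rev (map abs ks'))" using sw by (simp add: sorted_wrt_rev)
  qed
  then show ?thesis using that m sw by simp
qed

lemma sum_abs_bound:
  fixes f :: "int \<Rightarrow> int"
  assumes "\<And>x. x \<in> set xs \<Longrightarrow> \<bar>f x\<bar> \<le> B"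
  shows "\<bar>sum_list (map f xs)\<bar> \<le> int (length xs) * B"
  using assms
proof (induction xs)
  case Nil then show ?case by simp
next
  case (Cons x xs)
  have "\<bar>f x + sum_list (map f xs)\<bar> \<le> \<bar>f x\<bar> + \<bar>sum_list (map f xs)\<bar>" by (rule abs_triangle_ineq)
  also have "\<dots> \<le> B + int (length xs) * B" using Cons by (intro add_mono) auto
  finally show ?case by (simp add: algebra_simps)
qed

lemma core:
  fixes a b r k H Hr M :: int
  assumes "M = \<bar>a\<bar>" "\<bar>b\<bar> \<le> M" "4*\<bar>r\<bar> \<le> M" "\<bar>r\<bar> < \<bar>k\<bar>" "k = a+b+r" "k \<noteq> a"
    "H = 3*(a+b)*(a+r)*(b+r) + Hr"
  shows "3*M^2 \<le> 8*\<bar>H\<bar> + 8*\<bar>Hr\<bar>"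
proof -
  define P where "P = \<bar>a+b\<bar>*\<bar>a+r\<bar>*\<bar>b+r\<bar>"
  have ab: "\<bar>a+b\<bar> \<ge> 1" using assms by auto
  have br: "\<bar>b+r\<bar> \<ge> 1" using assms by auto
  have "\<bar>a\<bar> \<le> \<bar>a+r\<bar> + \<bar>r\<bar>" using abs_triangle_ineq[of "a+r" "-r"] by simp
  then have ar: "2*\<bar>a+r\<bar> \<ge> M" using assms(1,3) abs_ge_zero[of r] by (smt (verit))
  have "8*P \<ge> M^2"
  proof (cases "2*\<bar>b\<bar> \<le> M")
    case True
    moreover have "\<bar>a\<bar> \<le> \<bar>a+b\<bar> + \<bar>b\<bar>" using abs_triangle_ineq[of "a+b" "-b"] by simp
    ultimately have "2*\<bar>a+b\<bar> \<ge> M" using assms(1) abs_ge_zero[of b] by (smt (verit))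
    then have "(2*\<bar>a+b\<bar>)*(2*\<bar>a+r\<bar>) \<ge> M*M" using ar assms(1)
      by (intro mult_mono) auto
    moreover have "(2*\<bar>a+b\<bar>)*(2*\<bar>a+r\<bar>) \<le> 4*P"
    proof -
      have "\<bar>a+b\<bar>*\<bar>a+r\<bar>*1 \<le> \<bar>a+b\<bar>*\<bar>a+r\<bar>*\<bar>b+r\<bar>"
        using br by (intro mult_left_mono) auto
      then show ?thesis unfolding P_def by simp
    qed
    ultimately have "M*M \<le> 4*P" by linarith
    moreover have "P \<ge> 0" unfolding P_def by simp
    ultimately show ?thesis by (simp add: power2_eq_square)
  next
    case False
    moreover have "\<bar>b\<bar> \<le> \<bar>b+r\<bar> + \<bar>r\<bar>" using abs_triangle_ineq[of "b+r" "-r"] by simp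
    ultimately have "4*\<bar>b+r\<bar> \<ge> M" using assms(1,3) abs_ge_zero[of r] by (smt (verit))
    then have "(2*\<bar>a+r\<bar>)*(4*\<bar>b+r\<bar>) \<ge> M*M" using ar assms(1)
      by (intro mult_mono) auto
    moreover have "(2*\<bar>a+r\<bar>)*(4*\<bar>b+r\<bar>) \<le> 8*P"
    proof -
      have "\<bar>a+r\<bar>*\<bar>b+r\<bar>*1 \<le> \<bar>a+r\<bar>*\<bar>b+r\<bar>*\<bar>a+b\<bar>"
        using ab by (intro mult_left_mono) auto
      then show ?thesis unfolding P_def by (simp add: ac_simps)
    qed
    ultimately show ?thesis by (simp add: power2_eq_square)
  qed
  moreover have "\<bar>3*(a+b)*(a+r)*(b+r)\<bar> = 3*P" unfolding P_def by (simp add: abs_mult del: distrib_left_numeral distrib_right_numeral ring_distribs)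
  moreover have "\<bar>3*(a+b)*(a+r)*(b+r)\<bar> \<le> \<bar>H\<bar> + \<bar>Hr\<bar>" using assms(7) by linarith
  ultimately show ?thesis by linarith
qed

lemma hrest_bound:
  fixes y m3 m4 :: int and T :: "int list"
  assumes y: "\<bar>y\<bar> \<le> m3" and T: "\<forall>t\<in>set T. \<bar>t\<bar> \<le> m4" and m: "m4 \<le> m3" "0 \<le> m4"
  shows "\<bar>(y + sum_list T)^3 - y^3 - sum_list (map (\<lambda>x. x^3) T)\<bar>
     \<le> (4*int (length T) + 3*int (length T)^2 + int (length T)^3) * m3^2 * m4"
proof -
  define l where "l = int (length T)"
  define t where "t = sum_list T"
  define S where "S = sum_list (map (\<lambda>x. x^3) T)"
  have l0: "l \<ge> 0" unfolding l_def by simp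
  have m30: "m3 \<ge> 0" using m by simp
  have tb: "\<bar>t\<bar> \<le> l * m4"
    using sum_abs_bound[of T "\<lambda>x. x" m4] T unfolding t_def l_def by simp
  have Sb: "\<bar>S\<bar> \<le> l * m4^3"
  proof -
    have "\<And>x. x \<in> set T \<Longrightarrow> \<bar>x^3\<bar> \<le> m4^3"
      using T by (auto simp: power_abs intro: power_mono)
    then show ?thesis using sum_abs_bound[of T "\<lambda>x. x^3" "m4^3"] unfolding S_def l_def by simp
  qed
  have eq: "(y + t)^3 - y^3 - S = 3*y^2*t + 3*y*t^2 + t^3 - S"
    by (simp add: power3_eq_cube power2_eq_square algebra_simps)
  have b1: "\<bar>3*y^2*t\<bar> \<le> 3*l*m3^2*m4"
  proof -
    have "\<bar>y\<bar>^2 \<le> m3^2" using y by (intro power_mono) auto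
    then have "\<bar>y\<bar>^2 * \<bar>t\<bar> \<le> m3^2 * (l*m4)" using tb by (intro mult_mono) auto
    then show ?thesis by (simp add: abs_mult power_abs algebra_simps)
  qed
  have b2: "\<bar>3*y*t^2\<bar> \<le> 3*l^2*m3^2*m4"
  proof -
    have "\<bar>t\<bar>^2 \<le> (l*m4)^2" using tb by (intro power_mono) auto
    then have "\<bar>y\<bar> * \<bar>t\<bar>^2 \<le> m3 * (l*m4)^2" using y m30 by (intro mult_mono) auto
    also have "m3 * (l*m4)^2 = l^2 * m3 * m4 * m4" by (simp add: power2_eq_square)
    also have "\<dots> \<le> l^2 * m3 * m3 * m4" using m l0 m30
      by (intro mult_right_mono mult_left_mono) auto
    finally show ?thesis by (simp add: abs_mult power_abs power2_eq_square algebra_simps)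
  qed
  have b3: "\<bar>t^3\<bar> \<le> l^3*m3^2*m4"
  proof -
    have "\<bar>t\<bar>^3 \<le> (l*m4)^3" using tb by (intro power_mono) auto
    also have "(l*m4)^3 = l^3 * (m4 * m4) * m4" by (simp add: power3_eq_cube)
    also have "\<dots> \<le> l^3 * (m3 * m3) * m4" using m l0 m30
      by (intro mult_right_mono mult_left_mono mult_mono) auto
    finally show ?thesis by (simp add: power_abs power2_eq_square)
  qed
  have b4: "\<bar>S\<bar> \<le> l*m3^2*m4"
  proof -
    have "l * m4^3 = l * (m4 * m4) * m4" by (simp add: power3_eq_cube)
    also have "\<dots> \<le> l * (m3 * m3) * m4" using m l0 m30
      by (intro mult_right_mono mult_left_mono mult_mono) auto
    finally show ?thesis using Sb by (simp add: power2_eq_square)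
  qed
  have "\<bar>(y + t)^3 - y^3 - S\<bar> \<le> 3*l*m3^2*m4 + 3*l^2*m3^2*m4 + l^3*m3^2*m4 + l*m3^2*m4"
    unfolding eq using b1 b2 b3 b4 by linarith
  then show ?thesis unfolding t_def S_def l_def by (simp add: algebra_simps)
qed

lemma Hn_cons2:
  "Hn (a#b#rest) = 3*(a+b)*(a+sum_list rest)*(b+sum_list rest)
     + ((sum_list rest)^3 - sum_list (map (\<lambda>x. x^3) rest))"
  unfolding Hn_def by (simp add: power3_eq_cube algebra_simps)

lemma case2:
  fixes a b :: int
  assumes "a \<noteq> 0" "b \<noteq> 0" "a + b \<noteq> 0" "\<bar>b\<bar> \<le> \<bar>a\<bar>"
  shows "3*a^2 \<le> 8*\<bar>Hn [a,b]\<bar>"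
proof -
  have "3*\<bar>a\<bar>^2 \<le> 8*\<bar>Hn [a,b]\<bar> + 8*\<bar>0::int\<bar>"
    by (rule core[where r=0 and k="a+b" and b=b]) (use assms in \<open>auto simp: Hn_cons2\<close>)
  then show ?thesis by simp
qed

lemma case3:
  fixes a b y N :: int
  assumes "\<bar>b\<bar> \<le> \<bar>a\<bar>" "\<bar>y\<bar> \<le> \<bar>b\<bar>" "a+b+y \<noteq> a" "12 \<le> N" "N*\<bar>y\<bar> < \<bar>a+b+y\<bar>"
  shows "a^2 \<le> N*\<bar>Hn [a,b,y]\<bar>"
proof -
  have "\<bar>a+b+y\<bar> \<le> 3*\<bar>a\<bar>" using assms(1,2) by (smt (verit))
  then have "N*(4*\<bar>y\<bar>) < 12*\<bar>a\<bar>" using assms(5) by linarith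
  also have "\<dots> \<le> N*\<bar>a\<bar>" using assms(4) by (intro mult_right_mono) auto
  finally have y4: "4*\<bar>y\<bar> < \<bar>a\<bar>" using assms(4) by simp
  have "\<bar>y\<bar> \<le> N*\<bar>y\<bar>" using assms(4) by (simp add: mult_le_cancel_right1)
  then have yk: "\<bar>y\<bar> < \<bar>a+b+y\<bar>" using assms(5) by linarith
  have "3*\<bar>a\<bar>^2 \<le> 8*\<bar>Hn [a,b,y]\<bar> + 8*\<bar>0::int\<bar>"
    by (rule core[where r=y and k="a+b+y" and b=b]) (use assms y4 yk in \<open>auto simp: Hn_cons2\<close>)
  then have "3*a^2 \<le> 8*\<bar>Hn [a,b,y]\<bar>" by simp
  moreover have "3*\<bar>Hn [a,b,y]\<bar> \<le> N*\<bar>Hn [a,b,y]\<bar>" using assms(4) by (intro mult_right_mono) auto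
  ultimately show ?thesis by linarith
qed

lemma case4:
  fixes a b y3 y4 N :: int and ys :: "int list"
  defines "l \<equiv> int (length ys) + 1"
  assumes ord: "\<bar>b\<bar> \<le> \<bar>a\<bar>" "\<bar>y3\<bar> \<le> \<bar>b\<bar>" "\<bar>y4\<bar> \<le> \<bar>y3\<bar>" "\<forall>y\<in>set ys. \<bar>y\<bar> \<le> \<bar>y4\<bar>"
    and y4nz: "y4 \<noteq> 0"
    and ka: "a+b+sum_list (y3#y4#ys) \<noteq> a"
    and N1: "16*(l+1)^2 \<le> N" and N2: "8*(4*l + 3*l^2 + l^3) + 8 \<le> 3*N"
    and C: "N*\<bar>y3\<bar> < \<bar>a+b+sum_list (y3#y4#ys)\<bar>"
    and D: "N*(y3^2*\<bar>y4\<bar>) < a^2"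
  shows "a^2 \<le> N*\<bar>Hn (a#b#y3#y4#ys)\<bar>"
proof -
  define T where "T = y4#ys"
  define r where "r = sum_list (y3#T)"
  define k where "k = a+b+r"
  define m3 where "m3 = \<bar>y3\<bar>"
  define m4 where "m4 = \<bar>y4\<bar>"
  define K where "K = 4*l + 3*l^2 + l^3"
  define Hr where "Hr = r^3 - sum_list (map (\<lambda>x. x^3) (y3#T))"
  have l0: "l \<ge> 1" unfolding l_def by simp
  have lT: "int (length T) = l" unfolding T_def l_def by simp
  have m41: "m4 \<ge> 1" using y4nz unfolding m4_def by simp
  have m30: "m3 \<ge> 0" unfolding m3_def by simp
  have Tb: "\<forall>t\<in>set T. \<bar>t\<bar> \<le> m4" using ord(4) unfolding T_def m4_def by auto
  have Npos: "N > 0" using N1 l0 by (smt (verit) zero_less_power)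
  have Hsplit: "Hn (a#b#y3#y4#ys) = 3*(a+b)*(a+r)*(b+r) + Hr"
    unfolding Hn_cons2 r_def Hr_def T_def by simp
  have Hrb: "\<bar>Hr\<bar> \<le> K * m3^2 * m4"
  proof -
    have "Hr = (y3 + sum_list T)^3 - y3^3 - sum_list (map (\<lambda>x. x^3) T)"
      unfolding Hr_def r_def by simp
    also have "\<bar>\<dots>\<bar> \<le> (4*int (length T) + 3*int (length T)^2 + int (length T)^3) * m3^2 * m4"
      by (rule hrest_bound) (use Tb ord(3) m41 in \<open>auto simp: m3_def m4_def\<close>)
    finally show ?thesis unfolding lT K_def .
  qed
  have rb: "\<bar>r\<bar> \<le> (l+1)*m3"
  proof -
    have "\<bar>sum_list T\<bar> \<le> l * m4"
      using sum_abs_bound[of T "\<lambda>x. x" m4] Tb lT by simp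
    also have "\<dots> \<le> l * m3" using ord(3) l0 unfolding m3_def m4_def by (intro mult_left_mono) auto
    finally show ?thesis unfolding r_def m3_def by (simp add: algebra_simps)
  qed
  have "N*m3^2 \<le> N*(m3^2*m4)" using Npos m41 m30
    by (intro mult_left_mono) (auto simp: mult_le_cancel_left1)
  also have "\<dots> < a^2" using D unfolding m3_def m4_def by simp
  finally have Nm3: "N*m3^2 < a^2" .
  have "(4*(l+1)*m3)^2 = 16*(l+1)^2*m3^2" by (simp add: power2_eq_square algebra_simps)
  also have "\<dots> \<le> N*m3^2" using N1 by (intro mult_right_mono) auto
  also have "\<dots> < \<bar>a\<bar>^2" using Nm3 by simp
  finally have "4*(l+1)*m3 < \<bar>a\<bar>" by (rule power_less_imp_less_base) simp
  then have r4: "4*\<bar>r\<bar> \<le> \<bar>a\<bar>" using rb by linarith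
  have "(l+1)*m3 \<le> N*m3"
  proof -
    have "(l+1) \<le> 16*(l+1)^2" using l0 by (simp add: power2_eq_square)
    then have "l+1 \<le> N" using N1 by linarith
    then show ?thesis using m30 by (intro mult_right_mono) auto
  qed
  then have rk: "\<bar>r\<bar> < \<bar>k\<bar>" using rb C unfolding k_def r_def T_def m3_def by simp
  have main: "3*\<bar>a\<bar>^2 \<le> 8*\<bar>Hn (a#b#y3#y4#ys)\<bar> + 8*\<bar>Hr\<bar>"
    by (rule core[where r=r and k=k and b=b]) (use ord r4 rk ka Hsplit in \<open>auto simp: k_def r_def T_def\<close>)
  have "N*\<bar>Hr\<bar> \<le> N*(K*m3^2*m4)" using Hrb Npos by (intro mult_left_mono) auto
  also have "\<dots> = K*(N*(m3^2*m4))" by (simp add: algebra_simps)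
  also have "\<dots> \<le> K*a^2"
  proof -
    have "K \<ge> 0" unfolding K_def using l0 by simp
    then show ?thesis using D unfolding m3_def m4_def by (intro mult_left_mono) auto
  qed
  finally have NHr: "N*\<bar>Hr\<bar> \<le> K*a^2" .
  have "3*N*a^2 \<le> 8*N*\<bar>Hn (a#b#y3#y4#ys)\<bar> + 8*N*\<bar>Hr\<bar>"
    using mult_left_mono[OF main, of N] Npos by (simp add: algebra_simps)
  then have "3*N*a^2 - 8*K*a^2 \<le> 8*N*\<bar>Hn (a#b#y3#y4#ys)\<bar>" using NHr by linarith
  moreover have "8*a^2 \<le> 3*N*a^2 - 8*K*a^2"
  proof -
    have "(8::int)*a^2 = 8*1*a^2" by simp
    have "(8*K + 8)*a^2 \<le> (3*N)*a^2" using N2 unfolding K_def by (intro mult_right_mono) auto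
    then show ?thesis by (simp add: algebra_simps)
  qed
  ultimately have "8*a^2 \<le> 8*(N*\<bar>Hn (a#b#y3#y4#ys)\<bar>)" by (simp add: algebra_simps)
  then show ?thesis by simp
qed

lemma conv_ge:
  assumes "0 < N" "x \<le> N*y"
  shows "1 / real_of_int N * real_of_int x \<le> real_of_int y"
proof -
  have "real_of_int x \<le> real_of_int N * real_of_int y" using assms(2) by (metis of_int_le_iff of_int_mult)
  then show ?thesis using assms(1) by (simp add: field_simps)
qed

lemma conv_lt:
  assumes "0 < N" "\<not> (1 / real_of_int N * real_of_int z \<le> real_of_int w)"
  shows "N*w < z"
proof -
  have "real_of_int N * real_of_int w < real_of_int z" using assms by (simp add: field_simps)
  then show ?thesis by (metis of_int_less_iff of_int_mult)
qed

lemma len3: "length xs = 3 \<Longrightarrow> \<exists>a b c. xs = [a,b,c]"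
  by (auto simp add: numeral_eq_Suc length_Suc_conv)

lemma len4: "4 \<le> length xs \<Longrightarrow> \<exists>a b c d ys. xs = a#b#c#d#ys"
  by (simp add: numeral_eq_Suc Suc_le_length_iff) blast

lemma perm_facts:
  fixes ks ks' :: "int list"
  assumes "mset ks' = mset ks"
  shows "set ks' = set ks" "sum_list ks' = sum_list ks" "Hn ks' = Hn ks" "length ks' = length ks"
proof -
  show "set ks' = set ks" using assms by (metis set_mset_mset)
  show "sum_list ks' = sum_list ks" using assms by (metis sum_mset_sum_list)
  moreover have "sum_list (map (\<lambda>x. x^3) ks') = sum_list (map (\<lambda>x. x^3) ks)"
    using assms by (metis mset_map sum_mset_sum_list)
  ultimately show "Hn ks' = Hn ks" unfolding Hn_def by simp
  show "length ks' = length ks" using assms by (metis size_mset)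
qed

lemma canon:
  fixes ks :: "int list"
  obtains ks' where "set ks' = set ks" "sum_list ks' = sum_list ks" "Hn ks' = Hn ks"
    "length ks' = length ks" "sorted_wrt (\<lambda>x y. \<bar>y\<bar> \<le> \<bar>x\<bar>) ks'"
    "\<And>j. j - 1 < length ks \<Longrightarrow> kmaxj ks j = \<bar>ks' ! (j-1)\<bar>"
    "ks \<noteq> [] \<Longrightarrow> kmax ks = \<bar>hd ks'\<bar>"
proof -
  obtain ks' where m: "mset ks' = mset ks" and srt: "rev (sort (map abs ks)) = map abs ks'"
    and sw: "sorted_wrt (\<lambda>x y. y \<le> x) (map abs ks')" by (rule normalize)
  note pf = perm_facts[OF m]
  have sw': "sorted_wrt (\<lambda>x y. \<bar>y\<bar> \<le> \<bar>x\<bar>) ks'" using sw by (simp add: sorted_wrt_map)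
  have kj: "kmaxj ks j = \<bar>ks' ! (j-1)\<bar>" if "j - 1 < length ks" for j
    unfolding kmaxj_def srt using that pf(4) by simp
  have km: "kmax ks = \<bar>hd ks'\<bar>" if ne: "ks \<noteq> []"
  proof -
    obtain a rest where ks': "ks' = a # rest" using ne pf(4) by (cases ks') auto
    have "Max (abs ` set ks') = \<bar>a\<bar>"
      by (rule Max_eqI) (use sw' in \<open>auto simp: ks'\<close>)
    then show ?thesis unfolding kmax_def pf(1)[symmetric] ks' by simp
  qed
  show ?thesis by (rule that[OF pf sw' kj km])
qed

lemma main2:
  fixes ks :: "int list" and N :: int
  assumes "length ks = 2" "\<forall>x\<in>set ks. x \<noteq> 0" "sum_list ks \<noteq> 0" "3 \<le> N"
  shows "1 / real_of_int N * real_of_int (kmax ks) ^ 2 \<le> \<bar>real_of_int (Hn ks)\<bar>"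
proof -
  obtain ks' where c: "set ks' = set ks" "sum_list ks' = sum_list ks" "Hn ks' = Hn ks"
    "length ks' = length ks" "sorted_wrt (\<lambda>x y. \<bar>y\<bar> \<le> \<bar>x\<bar>) ks'"
    "\<And>j. j - 1 < length ks \<Longrightarrow> kmaxj ks j = \<bar>ks' ! (j-1)\<bar>"
    "ks \<noteq> [] \<Longrightarrow> kmax ks = \<bar>hd ks'\<bar>" by (rule canon[of ks]) blast
  obtain a b where ks': "ks' = [a,b]" using c(4) assms(1)
    by (cases ks'; cases "tl ks'"; auto)
  have ne: "ks \<noteq> []" using assms(1) by auto
  have km: "kmax ks = \<bar>a\<bar>" using c(7)[OF ne] ks' by simp
  have "3*a^2 \<le> 8*\<bar>Hn [a,b]\<bar>"
    by (rule case2) (use assms c ks' in auto)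
  moreover have "3*\<bar>Hn ks\<bar> \<le> N*\<bar>Hn ks\<bar>" using assms(4) by (intro mult_right_mono) auto
  ultimately have "\<bar>a\<bar>^2 \<le> N*\<bar>Hn ks\<bar>" using c(3) ks' by simp
  then have "1 / real_of_int N * real_of_int (\<bar>a\<bar>^2) \<le> real_of_int \<bar>Hn ks\<bar>"
    by (rule conv_ge[rotated]) (use assms(4) in simp)
  then show ?thesis using km by simp
qed



lemma main3:
  fixes ks :: "int list" and N :: int
  assumes "length ks = n" "n = 3" "\<forall>x\<in>set ks. x \<noteq> 0" "sum_list ks \<noteq> 0" "12 \<le> N"
  shows "1 / real_of_int N * real_of_int (kmax ks) ^ 2 \<le> \<bar>real_of_int (Hn ks)\<bar> \<or>
         (\<exists>j0<n. ks ! j0 = sum_list ks) \<or>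
         (\<forall>j<n. real_of_int \<bar>ks ! j\<bar> \<ge> 1 / real_of_int N * real_of_int \<bar>sum_list ks\<bar>)"
proof -
  obtain ks' where c: "set ks' = set ks" "sum_list ks' = sum_list ks" "Hn ks' = Hn ks"
    "length ks' = length ks" "sorted_wrt (\<lambda>x y. \<bar>y\<bar> \<le> \<bar>x\<bar>) ks'"
    "\<And>j. j - 1 < length ks \<Longrightarrow> kmaxj ks j = \<bar>ks' ! (j-1)\<bar>"
    "ks \<noteq> [] \<Longrightarrow> kmax ks = \<bar>hd ks'\<bar>" by (rule canon[of ks]) blast
  obtain a b y where ks': "ks' = [a,b,y]" using len3[of ks'] c(4) assms(1,2) by auto
  have ne: "ks \<noteq> []" using assms(1,2) by auto
  have km: "kmax ks = \<bar>a\<bar>" using c(7)[OF ne] ks' by simp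
  have ord: "\<bar>b\<bar> \<le> \<bar>a\<bar>" "\<bar>y\<bar> \<le> \<bar>b\<bar>" using c(5) ks' by auto
  have Npos: "0 < N" using assms(5) by simp
  have "1 / real_of_int N * real_of_int (kmax ks) ^ 2 \<le> \<bar>real_of_int (Hn ks)\<bar>"
    if nB: "\<not> (\<exists>j0<n. ks ! j0 = sum_list ks)"
    and nC: "\<not> (\<forall>j<n. real_of_int \<bar>ks ! j\<bar> \<ge> 1 / real_of_int N * real_of_int \<bar>sum_list ks\<bar>)"
  proof -
    have notin: "sum_list ks \<notin> set ks" using nB assms(1) by (auto simp: in_set_conv_nth)
    have sk: "sum_list ks = a+b+y" using c(2) ks' by simp
    have sa: "set ks = {a,b,y}" using c(1) ks' by simp
    have ka: "a+b+y \<noteq> a" using notin sk sa by force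
    obtain j where j: "j < n" "\<not> (real_of_int \<bar>ks ! j\<bar> \<ge> 1 / real_of_int N * real_of_int \<bar>sum_list ks\<bar>)"
      using nC by blast
    have "N*\<bar>ks ! j\<bar> < \<bar>sum_list ks\<bar>" using conv_lt[OF Npos] j(2) by simp
    moreover have "ks ! j \<in> set ks'" using j(1) assms(1) c(1) by simp
    then have "ks ! j = a \<or> ks ! j = b \<or> ks ! j = y" using ks' by simp
    then have "\<bar>y\<bar> \<le> \<bar>ks ! j\<bar>" using ord by (metis order_trans order_refl)
    then have "N*\<bar>y\<bar> \<le> N*\<bar>ks ! j\<bar>" using Npos by (intro mult_left_mono) auto
    ultimately have C: "N*\<bar>y\<bar> < \<bar>a+b+y\<bar>" using c(2) ks' by simp
    have "a^2 \<le> N*\<bar>Hn [a,b,y]\<bar>" by (rule case3[OF ord ka assms(5) C])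
    then have "\<bar>a\<bar>^2 \<le> N*\<bar>Hn ks\<bar>" using c(3) ks' by simp
    then have "1 / real_of_int N * real_of_int (\<bar>a\<bar>^2) \<le> real_of_int \<bar>Hn ks\<bar>"
      by (rule conv_ge[rotated]) (use Npos in simp)
    then show ?thesis using km by simp
  qed
  then show ?thesis by blast
qed



lemma Nbounds:
  fixes m l :: int
  assumes "4 \<le> m" "l = m - 3"
  shows "16*(l+1)^2 \<le> 100*m^3" "8*(4*l + 3*l^2 + l^3) + 8 \<le> 3*(100*m^3)"
proof -
  have l1: "1 \<le> l" "l \<le> m" using assms by auto
  have "(l+1)^2 \<le> m^2" using assms by (intro power_mono) auto
  also have "m^2 \<le> m^3" using assms by (simp add: power_increasing)
  finally have "(l+1)^2 \<le> m^3" .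
  moreover have "0 \<le> m^3" using assms by simp
  ultimately show "16*(l+1)^2 \<le> 100*m^3" by linarith
  have "l \<le> l^3" using l1 by (metis power_increasing power_one_right one_le_numeral power_one_right zero_less_numeral le_numeral_extra(4) numeral_le_iff semiring_norm(68) less_imp_le)
  moreover have "l^2 \<le> l^3" using l1 by (simp add: power_increasing)
  moreover have "l^3 \<le> m^3" using l1 by (intro power_mono) auto
  moreover have "1 \<le> m^3" using assms by simp
  ultimately show "8*(4*l + 3*l^2 + l^3) + 8 \<le> 3*(100*m^3)" by (smt (verit))
qed

lemma main4:
  fixes ks :: "int list" and N :: int
  assumes "length ks = n" "4 \<le> n" "\<forall>x\<in>set ks. x \<noteq> 0" "sum_list ks \<noteq> 0" "N = 100 * int n ^ 3"
  shows "1 / real_of_int N * real_of_int (kmax ks) ^ 2 \<le> \<bar>real_of_int (Hn ks)\<bar> \<or>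
         (\<exists>j0<n. sum_list ks = ks ! j0) \<or>
         real_of_int (kmaxj ks 3) \<ge> 1 / real_of_int N * real_of_int \<bar>sum_list ks\<bar> \<or>
         real_of_int (kmaxj ks 3) ^ 2 * real_of_int (kmaxj ks 4) \<ge> 1 / real_of_int N * real_of_int (kmax ks) ^ 2"
proof -
  obtain ks' where c: "set ks' = set ks" "sum_list ks' = sum_list ks" "Hn ks' = Hn ks"
    "length ks' = length ks" "sorted_wrt (\<lambda>x y. \<bar>y\<bar> \<le> \<bar>x\<bar>) ks'"
    "\<And>j. j - 1 < length ks \<Longrightarrow> kmaxj ks j = \<bar>ks' ! (j-1)\<bar>"
    "ks \<noteq> [] \<Longrightarrow> kmax ks = \<bar>hd ks'\<bar>" by (rule canon[of ks]) blast
  have "4 \<le> length ks'" using c(4) assms(1,2) by simp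
  then obtain a b y3 y4 ys where ks': "ks' = a#b#y3#y4#ys" using len4 by blast
  have ne: "ks \<noteq> []" using assms(1,2) by auto
  have km: "kmax ks = \<bar>a\<bar>" using c(7)[OF ne] ks' by simp
  have k3: "kmaxj ks 3 = \<bar>y3\<bar>" using c(6)[of 3] assms(1,2) ks' by simp
  have k4: "kmaxj ks 4 = \<bar>y4\<bar>" using c(6)[of 4] assms(1,2) ks' by simp
  have ord: "\<bar>b\<bar> \<le> \<bar>a\<bar>" "\<bar>y3\<bar> \<le> \<bar>b\<bar>" "\<bar>y4\<bar> \<le> \<bar>y3\<bar>" "\<forall>y\<in>set ys. \<bar>y\<bar> \<le> \<bar>y4\<bar>"
    using c(5) ks' by simp_all
  have y4nz: "y4 \<noteq> 0" using assms(3) c(1) ks' by force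
  have lenys: "int (length ys) + 1 = int n - 3" using c(4) assms(1,2) ks' by simp
  have "16*((int n - 3)+1)^2 \<le> 100*(int n)^3"
    by (rule Nbounds(1)) (use assms(2) in auto)
  then have N1: "16*((int (length ys) + 1)+1)^2 \<le> N" unfolding lenys assms(5) .
  have "8*(4*(int n - 3) + 3*(int n - 3)^2 + (int n - 3)^3) + 8 \<le> 3*(100*(int n)^3)"
    by (rule Nbounds(2)) (use assms(2) in auto)
  then have N2: "8*(4*(int (length ys) + 1) + 3*(int (length ys) + 1)^2 + (int (length ys) + 1)^3) + 8 \<le> 3*N"
    unfolding lenys assms(5) .
  have Npos: "0 < N" using assms(2,5) by simp
  have sk: "sum_list ks = a+b+sum_list (y3#y4#ys)" using c(2) ks' by simp
  have "1 / real_of_int N * real_of_int (kmax ks) ^ 2 \<le> \<bar>real_of_int (Hn ks)\<bar>"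
    if nB: "\<not> (\<exists>j0<n. sum_list ks = ks ! j0)"
    and nC: "\<not> (real_of_int (kmaxj ks 3) \<ge> 1 / real_of_int N * real_of_int \<bar>sum_list ks\<bar>)"
    and nD: "\<not> (real_of_int (kmaxj ks 3) ^ 2 * real_of_int (kmaxj ks 4) \<ge> 1 / real_of_int N * real_of_int (kmax ks) ^ 2)"
  proof -
    have notin: "sum_list ks \<notin> set ks" using nB assms(1) by (auto simp: in_set_conv_nth)
    have "a \<in> set ks" using c(1) ks' by force
    then have ka: "a+b+sum_list (y3#y4#ys) \<noteq> a" using notin sk by metis
    have C: "N*\<bar>y3\<bar> < \<bar>a+b+sum_list (y3#y4#ys)\<bar>"
      using conv_lt[OF Npos, of "\<bar>sum_list ks\<bar>" "\<bar>y3\<bar>"] nC k3 sk by simp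
    have nD': "\<not> (1 / real_of_int N * real_of_int (\<bar>a\<bar>^2) \<le> real_of_int (y3^2 * \<bar>y4\<bar>))"
      using nD k3 k4 km by simp
    have D: "N*(y3^2*\<bar>y4\<bar>) < a^2" using conv_lt[OF Npos nD'] by simp
    have "a^2 \<le> N*\<bar>Hn (a#b#y3#y4#ys)\<bar>" by (rule case4[OF ord y4nz ka N1 N2 C D])
    then have "\<bar>a\<bar>^2 \<le> N*\<bar>Hn ks\<bar>" using c(3) ks' by simp
    then have "1 / real_of_int N * real_of_int (\<bar>a\<bar>^2) \<le> real_of_int \<bar>Hn ks\<bar>"
      by (rule conv_ge[rotated]) (use Npos in simp)
    then show ?thesis using km by simp
  qed
  then show ?thesis by blast
qed


theorem proposition2:
  fixes n :: nat
  assumes "n \<ge> 2"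
  shows "\<exists>c::real. c > 0 \<and>
    (\<forall>ks :: int list. length ks = n \<and> (\<forall>x\<in>set ks. x \<noteq> 0) \<and> sum_list ks \<noteq> 0 \<longrightarrow>
      (n = 2 \<longrightarrow> \<bar>real_of_int (Hn ks)\<bar> \<ge> c * real_of_int (kmax ks) ^ 2) \<and>
      (n = 3 \<longrightarrow>
         \<bar>real_of_int (Hn ks)\<bar> \<ge> c * real_of_int (kmax ks) ^ 2 \<or>
         (\<exists>j0<n. ks ! j0 = sum_list ks) \<or>
         (\<forall>j<n. real_of_int \<bar>ks ! j\<bar> \<ge> c * real_of_int \<bar>sum_list ks\<bar>)) \<and>
      (n \<ge> 4 \<longrightarrow>
         \<bar>real_of_int (Hn ks)\<bar> \<ge> c * real_of_int (kmax ks) ^ 2 \<or>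
         (\<exists>j0<n. sum_list ks = ks ! j0) \<or>
         real_of_int (kmaxj ks 3) \<ge> c * real_of_int \<bar>sum_list ks\<bar> \<or>
         real_of_int (kmaxj ks 3) ^ 2 * real_of_int (kmaxj ks 4) \<ge> c * real_of_int (kmax ks) ^ 2))"
  proof -
  define N :: int where "N = 100 * int n ^ 3"
  have "(1::int) \<le> int n ^ 3" using assms by (simp add: one_le_power)
  then have N12: "12 \<le> N" unfolding N_def by linarith
  show ?thesis
    apply (rule exI[of _ "1 / real_of_int N"])
    apply (intro conjI allI impI)
    subgoal using N12 by simp
    subgoal for ks using main2[of ks N] N12 by auto
    subgoal for ks using main3[of ks n N] N12 by blast
    subgoal for ks using main4[of ks n N] N_def by blast
    done
qed

end
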